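(* Let $\epsilon<0.501$. Then there do not exist maps $f_r,f_c$ (where $f_r$ maps each row player's payoff matrix $R\in[0,1]^{n\times n}$ to a mixed strategy over rows and $f_c$ maps each column player's payoff matrix $C\in[0,1]^{n\times n}$ to a mixed strategy over columns, for every $n$) such that for every $n$ and every bimatrix game $(R,C)$ with $R,C\in[0,1]^{n\times n}$ the profile $(f_r(R),f_c(C))$ is an $\epsilon$-approximate Nash equilibrium. That is, if each player independently computes a mixed strategy from his own payoff matrix, an $\epsilon$-approximate Nash equilibrium cannot be guaranteed for $\epsilon<0.501$.
   Context: A bimatrix game $(R,C)$ has $n\times n$ payoff matrices with entries in $[0,1]$ for the row and column player. For mixed strategies $\mathbf{x},\mathbf{y}$ the payoffs are $\mathbf{x}^TR\mathbf{y}$ and $\mathbf{x}^TC\mathbf{y}$. $(\mathbf{x},\mathbf{y})$ is an $\epsilon$-approximate Nash equilibrium if for all pure strategies $i$: $\mathbf{e}_i^TR\mathbf{y}\le\mathbf{x}^TR\mathbf{y}+\epsilon$ and $\mathbf{x}^TC\mathbf{e}_i\le\mathbf{x}^TC\mathbf{y}+\epsilon$, where $\mathbf{e}_i$ is the $i$-th unit vector. *)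

theory Defs
  imports "HOL-Analysis.Analysis"
begin

definition payoff_matrix :: "nat \<Rightarrow> (nat \<Rightarrow> nat \<Rightarrow> real) \<Rightarrow> bool" where
  "payoff_matrix n A \<longleftrightarrow>
     (\<forall>i<n. \<forall>j<n. 0 \<le> A i j \<and> A i j \<le> 1) \<and>
     (\<forall>i j. (n \<le> i \<or> n \<le> j) \<longrightarrow> A i j = 0)"

definition mixed_strategy :: "nat \<Rightarrow> (nat \<Rightarrow> real) \<Rightarrow> bool" where
  "mixed_strategy n x \<longleftrightarrow> (\<forall>i<n. 0 \<le> x i) \<and> (\<Sum>i<n. x i) = 1"

definition payoff :: "nat \<Rightarrow> (nat \<Rightarrow> real) \<Rightarrow> (nat \<Rightarrow> nat \<Rightarrow> real) \<Rightarrow> (nat \<Rightarrow> real) \<Rightarrow> real" where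
  "payoff n x A y = (\<Sum>i<n. \<Sum>j<n. x i * A i j * y j)"

definition unit_vec :: "nat \<Rightarrow> nat \<Rightarrow> real" where
  "unit_vec i = (\<lambda>k. if k = i then 1 else 0)"

definition approx_nash ::
  "real \<Rightarrow> nat \<Rightarrow> (nat \<Rightarrow> nat \<Rightarrow> real) \<Rightarrow> (nat \<Rightarrow> nat \<Rightarrow> real) \<Rightarrow> (nat \<Rightarrow> real) \<Rightarrow> (nat \<Rightarrow> real) \<Rightarrow> bool" where
  "approx_nash \<epsilon> n R C x y \<longleftrightarrow>
     (\<forall>i<n. payoff n (unit_vec i) R y \<le> payoff n x R y + \<epsilon>) \<and>
     (\<forall>i<n. payoff n x C (unit_vec i) \<le> payoff n x C y + \<epsilon>)"

end

theory Submission
  imports Defs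
begin

lemma payoff_alt: "payoff n x A y = (\<Sum>i<n. x i * (\<Sum>j<n. A i j * y j))"
  unfolding payoff_def by (simp add: sum_distrib_left mult.assoc)

lemma payoff_unit_left: "i < n \<Longrightarrow> payoff n (unit_vec i) A y = (\<Sum>j<n. A i j * y j)"
proof -
  assume i: "i < n"
  have "\<And>ia. (if ia = i then 1 else 0) * (\<Sum>j<n. A ia j * y j) = (if ia = i then (\<Sum>j<n. A ia j * y j) else 0)"
    by simp
  then show ?thesis unfolding payoff_alt unit_vec_def using i by (simp add: sum.delta)
qed

lemma payoff_unit_right: "j < n \<Longrightarrow> payoff n x A (unit_vec j) = (\<Sum>i<n. x i * A i j)"
  unfolding payoff_alt unit_vec_def by (simp add: if_distrib cong: if_cong)

lemma exists_le_avg: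
  fixes f :: "'a \<Rightarrow> real"
  assumes "finite A" "A \<noteq> {}"
  shows "\<exists>a\<in>A. f a \<le> sum f A / card A"
proof (rule ccontr)
  assume "\<not> ?thesis"
  then have "\<And>a. a \<in> A \<Longrightarrow> sum f A / card A < f a" by (simp add: not_le)
  then have "sum (\<lambda>_. sum f A / card A) A < sum f A"
    using sum_strict_mono[OF assms, of "\<lambda>_. sum f A / card A" f] by blast
  moreover have "card A > 0" using assms by (simp add: card_gt_0_iff)
  ultimately show False by simp
qed

lemma block_sum:
  fixes f :: "nat \<Rightarrow> real"
  assumes "a + g \<le> n"
  shows "(\<Sum>i<n. if a \<le> i \<and> i < a + g then f i else 0) = (\<Sum>r<g. f (a + r))"
proof -
  have "(\<Sum>i<n. if a \<le> i \<and> i < a + g then f i else 0) = (\<Sum>i\<in>{..<n} \<inter> {a..<a+g}. f i)"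
    by (simp add: sum.inter_restrict atLeastLessThan_iff)
  also have "{..<n} \<inter> {a..<a+g} = {a..<a+g}" using assms by auto
  also have "(\<Sum>i\<in>{a..<a+g}. f i) = (\<Sum>r<g. f (a + r))"
    using sum.shift_bounds_nat_ivl[of f 0 a g] by (simp add: add.commute atLeast0LessThan)
  finally show ?thesis .
qed

lemma greedy:
  fixes w :: "nat \<Rightarrow> nat \<Rightarrow> real" and U :: "nat set"
  assumes fin: "finite U" and nn: "\<And>a b. a \<in> U \<Longrightarrow> b \<in> U \<Longrightarrow> 0 \<le> w a b"
    and w0: "\<And>a. w a a = 0"
    and in2: "\<And>c. c \<in> U \<Longrightarrow> (\<Sum>v\<in>U. w v c) \<le> 2"
    and out1: "\<And>c. c \<in> U \<Longrightarrow> (\<Sum>v\<in>U. w c v) \<le> 1"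
    and gU: "g < card U"
  shows "k \<le> g \<Longrightarrow> \<exists>S\<subseteq>U. card S = k \<and>
           (\<Sum>t\<in>S. \<Sum>c\<in>S. w t c) \<le> real k * (3 * real g / (real (card U) - real g))"
proof (induction k)
  case 0
  then show ?case by (rule_tac x="{}" in exI) simp
next
  case (Suc k)
  define q where "q = 3 * real g / (real (card U) - real g)"
  from Suc obtain S where S: "S \<subseteq> U" "card S = k" "(\<Sum>t\<in>S. \<Sum>c\<in>S. w t c) \<le> real k * q"
    unfolding q_def by auto
  have finS: "finite S" using S(1) fin finite_subset by blast
  define A where "A = U - S"
  have finA: "finite A" using fin A_def by simp
  have cardA: "card A = card U - k" using S finS A_def by (simp add: card_Diff_subset)
  have kU: "k < card U" using Suc.prems gU by simp
  have Ane: "A \<noteq> {}" using cardA kU by auto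
  define cost where "cost v = (\<Sum>c\<in>S. w v c) + (\<Sum>c\<in>S. w c v)" for v
  have s1: "(\<Sum>v\<in>A. \<Sum>c\<in>S. w v c) \<le> 2 * real k"
  proof -
    have "(\<Sum>v\<in>A. \<Sum>c\<in>S. w v c) \<le> (\<Sum>v\<in>U. \<Sum>c\<in>S. w v c)"
      apply (rule sum_mono2[OF fin]) using A_def apply blast
      using S(1) nn by (meson Diff_iff A_def subsetD sum_nonneg)
    also have "\<dots> = (\<Sum>c\<in>S. \<Sum>v\<in>U. w v c)" by (rule sum.swap)
    also have "\<dots> \<le> (\<Sum>c\<in>S. 2)" apply (rule sum_mono) using in2 S(1) by blast
    finally show ?thesis using S(2) by simp
  qed
  have s2: "(\<Sum>v\<in>A. \<Sum>c\<in>S. w c v) \<le> real k"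
  proof -
    have "(\<Sum>v\<in>A. \<Sum>c\<in>S. w c v) \<le> (\<Sum>v\<in>U. \<Sum>c\<in>S. w c v)"
      apply (rule sum_mono2[OF fin]) using A_def apply blast
      using S(1) nn by (meson Diff_iff A_def subsetD sum_nonneg)
    also have "\<dots> = (\<Sum>c\<in>S. \<Sum>v\<in>U. w c v)" by (rule sum.swap)
    also have "\<dots> \<le> (\<Sum>c\<in>S. 1)" apply (rule sum_mono) using out1 S(1) by blast
    finally show ?thesis using S(2) by simp
  qed
  have "sum cost A \<le> 3 * real k" using s1 s2 unfolding cost_def sum.distrib by simp
  obtain v where v: "v \<in> A" "cost v \<le> sum cost A / card A"
    using exists_le_avg[OF finA Ane] by blast
  have cpos: "real (card U) - real g > 0" using gU by simp
  have "sum cost A / card A \<le> 3 * real k / (real (card U) - real g)"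
  proof (rule frac_le)
    show "0 \<le> 3 * real k" by simp
    show "sum cost A \<le> 3 * real k" by fact
    show "0 < real (card U) - real g" by fact
    show "real (card U) - real g \<le> real (card A)" using cardA Suc.prems kU by simp
  qed
  also have "\<dots> \<le> q" unfolding q_def using cpos Suc.prems
    by (intro divide_right_mono) auto
  finally have cv: "cost v \<le> q" using v by simp
  have vS: "v \<notin> S" using v A_def by simp
  have vU: "v \<in> U" using v A_def by simp
  have "(\<Sum>t\<in>insert v S. \<Sum>c\<in>insert v S. w t c)
        = (\<Sum>t\<in>S. \<Sum>c\<in>S. w t c) + cost v"
    using finS vS w0 unfolding cost_def by (simp add: sum.distrib)
  also have "\<dots> \<le> real (Suc k) * q" using S(3) cv by (simp add: algebra_simps)
  finally show ?case
    apply (rule_tac x="insert v S" in exI)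
    using S finS vS vU q_def by simp
qed

lemma ms_facts:
  assumes "mixed_strategy n x"
  shows "\<And>i. i < n \<Longrightarrow> 0 \<le> x i" "(\<Sum>i<n. x i) = 1" "\<And>i. i < n \<Longrightarrow> x i \<le> 1"
proof -
  show nn: "\<And>i. i < n \<Longrightarrow> 0 \<le> x i" using assms mixed_strategy_def by blast
  show s: "(\<Sum>i<n. x i) = 1" using assms mixed_strategy_def by blast
  fix i assume "i < n"
  then have "x i \<le> (\<Sum>i<n. x i)" using nn by (intro member_le_sum) auto
  then show "x i \<le> 1" using s by simp
qed

lemma main:
  fixes \<epsilon> :: real
  assumes eps: "\<epsilon> < 0.501"
  and H1: "\<forall>n R. 1 \<le> n \<longrightarrow> payoff_matrix n R \<longrightarrow> mixed_strategy n (fr n R)"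
  and H2: "\<forall>n C. 1 \<le> n \<longrightarrow> payoff_matrix n C \<longrightarrow> mixed_strategy n (fc n C)"
  and H3: "\<forall>n R C. 1 \<le> n \<longrightarrow> payoff_matrix n R \<longrightarrow> payoff_matrix n C \<longrightarrow>
                approx_nash \<epsilon> n R C (fr n R) (fc n C)"
  shows False
proof -
  define n :: nat where "n = 4000"
  have n1: "1 \<le> n" by (simp add: n_def)
  have n2000: "2000 \<le> n" by (simp add: n_def)
  define D where "D = (\<lambda>t i j. if i < n \<and> j < n \<and> j = t then (1::real) else 0)"
  have pmD: "\<And>t. payoff_matrix n (D t)" by (auto simp: payoff_matrix_def D_def)
  define Z where "Z = (\<lambda>(i::nat) (j::nat). (0::real))"
  have pmZ: "payoff_matrix n Z" by (simp add: payoff_matrix_def Z_def)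
  define Y where "Y = (\<lambda>t. fc n (D t))"
  have msY: "\<And>t. mixed_strategy n (Y t)" using H2 n1 pmD by (simp add: Y_def)
  note Yf = ms_facts[OF msY]
  have dom: "1 - \<epsilon> \<le> Y t t" if t: "t < n" for t
  proof -
    define x0 where "x0 = fr n Z"
    have ms: "mixed_strategy n x0" using H1 n1 pmZ x0_def by simp
    have "approx_nash \<epsilon> n Z (D t) x0 (Y t)" using H3 n1 pmZ pmD x0_def Y_def by simp
    then have c: "payoff n x0 (D t) (unit_vec t) \<le> payoff n x0 (D t) (Y t) + \<epsilon>"
      using t unfolding approx_nash_def by blast
    have l: "payoff n x0 (D t) (unit_vec t) = 1"
      using t ms_facts(2)[OF ms] by (simp add: payoff_unit_right D_def)
    have "payoff n x0 (D t) (Y t) = (\<Sum>i<n. x0 i * Y t t)"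
      unfolding payoff_alt D_def using t
      by (intro sum.cong refl) (simp add: if_distrib[of "\<lambda>z. z * _"] sum.delta cong: if_cong)
    also have "\<dots> = Y t t" using ms_facts(2)[OF ms] by (simp add: sum_distrib_right[symmetric])
    finally show ?thesis using c l by simp
  qed
  have eps0: "0 \<le> \<epsilon>" using dom[of 0] Yf(3)[of 0 0] by (simp add: n_def)

  define h where "h c = (\<Sum>v<n. Y v c)" for c
  define U where "U = {c. c < n \<and> h c \<le> 2}"
  define Hv where "Hv = {c. c < n \<and> \<not> h c \<le> 2}"
  have hnn: "0 \<le> h c" if "c < n" for c unfolding h_def using Yf(1) that by (simp add: sum_nonneg)
  have htot: "(\<Sum>c<n. h c) = real n"
    unfolding h_def by (subst sum.swap) (simp add: Yf(2))
  have finU: "finite U" and finH: "finite Hv" unfolding U_def Hv_def by auto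
  have UH: "U \<union> Hv = {..<n}" "U \<inter> Hv = {}" unfolding U_def Hv_def by auto
  have "2 * real (card Hv) \<le> (\<Sum>c\<in>Hv. h c)"
    using sum_mono[of Hv "\<lambda>_. 2::real" h] unfolding Hv_def by auto
  also have "\<dots> \<le> (\<Sum>c<n. h c)"
    by (rule sum_mono2) (auto simp: Hv_def hnn)
  finally have "card Hv \<le> 2000" using htot by (simp add: n_def)
  moreover have "card U + card Hv = n" using card_Un_disjoint[OF finU finH UH(2)] UH(1) by simp
  ultimately have cardU: "2000 \<le> card U" by (simp add: n_def)
  define w where "w a b = (if a = b then 0 else Y a b)" for a b
  have Usub: "U \<subseteq> {..<n}" unfolding U_def by auto
  have wnn: "\<And>a b. a \<in> U \<Longrightarrow> b \<in> U \<Longrightarrow> 0 \<le> w a b" unfolding w_def using Yf(1) Usub by auto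
  have wle: "w a b \<le> Y a b" if "b < n" for a b unfolding w_def using Yf(1) that by auto
  have in2: "(\<Sum>v\<in>U. w v c) \<le> 2" if "c \<in> U" for c
  proof -
    have "(\<Sum>v\<in>U. w v c) \<le> (\<Sum>v\<in>U. Y v c)" using that Usub wle by (intro sum_mono) auto
    also have "\<dots> \<le> h c" unfolding h_def using that Usub Yf(1) by (intro sum_mono2) auto
    finally show ?thesis using that U_def by simp
  qed
  have out1: "(\<Sum>v\<in>U. w c v) \<le> 1" if "c \<in> U" for c
  proof -
    have "(\<Sum>v\<in>U. w c v) \<le> (\<Sum>v\<in>U. Y c v)" using Usub wle by (intro sum_mono) auto
    also have "\<dots> \<le> (\<Sum>v<n. Y c v)" using Usub Yf(1) by (intro sum_mono2) auto
    finally show ?thesis using Yf(2) by simp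
  qed
  obtain G where G: "G \<subseteq> U" "card G = 20"
    "(\<Sum>t\<in>G. \<Sum>c\<in>G. w t c) \<le> real 20 * (3 * real 20 / (real (card U) - real 20))"
    using greedy[OF finU wnn _ in2 out1, of 20 20] cardU by (auto simp: w_def)
  have "3 * real 20 / (real (card U) - real 20) \<le> 60 / 1980"
    using cardU by (intro frac_le) auto
  then have IG: "(\<Sum>t\<in>G. \<Sum>c\<in>G. w t c) \<le> 20 / 33" using G(3) by simp
  have finG: "finite G" using G(1) finU finite_subset by blast
  obtain \<tau> where tau: "bij_betw \<tau> {..<20::nat} G"
    using ex_bij_betw_nat_finite[OF finG] G(2) by (auto simp: atLeast0LessThan)
  have tauG: "\<tau> r \<in> G" if "r < 20" for r using tau that bij_betwE by blast
  have Gn: "G \<subseteq> {..<n}" using G(1) Usub by auto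

  define Cb where "Cb = (\<lambda>(i::nat) (j::nat). if j < 100 \<and> j * 20 \<le> i \<and> i < j * 20 + 20 then (1::real) else 0)"
  have pmC: "payoff_matrix n Cb" unfolding payoff_matrix_def Cb_def using n2000 by auto
  define yB where "yB = fc n Cb"
  have msB: "mixed_strategy n yB" using H2 n1 pmC yB_def by simp
  note Bf = ms_facts[OF msB]
  have "(\<Sum>j<100. yB j) \<le> (\<Sum>j<n. yB j)" using Bf(1) n2000 by (intro sum_mono2) auto
  then have s100: "(\<Sum>j<100. yB j) \<le> 1" using Bf(2) by simp
  have z100: "(0::nat) \<in> {..<100}" by simp
  have ne: "{..<100::nat} \<noteq> {}" using z100 by (metis empty_iff)
  obtain j0 where j0in: "j0 \<in> {..<100::nat}" and j0le: "yB j0 \<le> sum yB {..<100} / real (card {..<100::nat})"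
    using exists_le_avg[OF finite_lessThan ne, of yB] by blast
  have j0: "j0 < 100" using j0in by simp
  have c100: "real (card {..<100::nat}) = 100" by simp
  have "sum yB {..<100} / real (card {..<100::nat}) \<le> 1 / 100"
    unfolding c100 using s100 by (intro divide_right_mono) simp_all
  then have yBj0a: "yB j0 \<le> 1/100" using j0le by linarith
  have yBj0: "yB j0 \<le> 1/100" "0 \<le> yB j0" using yBj0a Bf(1)[of j0] j0 n2000 by simp_all
  define a where "a = j0 * 20"
  have an: "a + 20 \<le> 2000" using j0 a_def by simp
  define R where "R = (\<lambda>i j. if a \<le> i \<and> i < a + 20 \<and> j < n then
                         (if j \<in> G then (if j = \<tau> (i - a) then (1::real) else 0) else 1) else 0)"
  have pmR: "payoff_matrix n R" unfolding payoff_matrix_def R_def using an n2000 by auto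
  define x where "x = fr n R"
  have msx: "mixed_strategy n x" using H1 n1 pmR x_def by simp
  note xf = ms_facts[OF msx]
  define X where "X r = x (a + r)" for r
  define P where "P = (\<Sum>r<20. X r)"
  have Xnn: "0 \<le> X r" if "r < 20" for r unfolding X_def using xf(1) an that n2000 by simp
  have XP: "X r \<le> P" if "r < 20" for r unfolding P_def using Xnn that by (intro member_le_sum) auto
  have P0: "0 \<le> P" unfolding P_def using Xnn by (intro sum_nonneg) simp
  have an': "a + 20 \<le> n" using an n2000 by simp
  have Pbound: "P * (2 - yB j0) \<le> 1 + \<epsilon>"
  proof -
    have "approx_nash \<epsilon> n R Cb x yB" using H3 n1 pmR pmC x_def yB_def by simp
    then have c: "payoff n x Cb (unit_vec j0) \<le> payoff n x Cb yB + \<epsilon>"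
      using j0 unfolding approx_nash_def by (auto simp: n_def)
    have "payoff n x Cb (unit_vec j0) = (\<Sum>i<n. if a \<le> i \<and> i < a + 20 then x i else 0)"
      using j0 by (simp add: payoff_unit_right Cb_def a_def n_def if_distrib cong: if_cong)
    also have "\<dots> = P" unfolding block_sum[OF an'] P_def X_def ..
    finally have l: "payoff n x Cb (unit_vec j0) = P" .
    have rowb: "(\<Sum>j<n. Cb i j * yB j) \<le> (if a \<le> i \<and> i < a + 20 then yB j0 else 1)" if "i < n" for i
    proof (cases "a \<le> i \<and> i < a + 20")
      case True
      have "(\<Sum>j<n. Cb i j * yB j) = (\<Sum>j<n. if j = j0 then yB j else 0)"
      proof (intro sum.cong refl)
        fix j assume "j \<in> {..<n}"
        have "(j < 100 \<and> j * 20 \<le> i \<and> i < j * 20 + 20) \<longleftrightarrow> j = j0"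
          using True j0 unfolding a_def by auto
        then show "Cb i j * yB j = (if j = j0 then yB j else 0)" unfolding Cb_def by auto
      qed
      also have "\<dots> = yB j0" using j0 by (simp add: n_def)
      finally show ?thesis using True by simp
    next
      case False
      have "(\<Sum>j<n. Cb i j * yB j) \<le> (\<Sum>j<n. yB j)"
        using Bf(1) by (intro sum_mono) (auto simp: Cb_def)
      moreover have "(if a \<le> i \<and> i < a + 20 then yB j0 else 1) = 1" using False by (simp only: if_False)
      ultimately show ?thesis using Bf(2) by simp
    qed
    have "payoff n x Cb yB \<le> (\<Sum>i<n. x i * (if a \<le> i \<and> i < a + 20 then yB j0 else 1))"
      unfolding payoff_alt using rowb xf(1) by (intro sum_mono mult_left_mono) auto
    also have "\<dots> = (\<Sum>i<n. x i + (if a \<le> i \<and> i < a + 20 then x i * (yB j0 - 1) else 0))"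
      by (intro sum.cong refl) (auto simp: algebra_simps)
    also have "\<dots> = 1 + P * (yB j0 - 1)"
      unfolding sum.distrib block_sum[OF an'] xf(2) P_def X_def by (simp add: sum_distrib_right)
    finally show ?thesis using c l by (simp add: algebra_simps)
  qed

  define J where "J r = (\<Sum>c\<in>G. w (\<tau> r) c)" for r
  have rowb: "\<epsilon> \<ge> 1 - \<epsilon> * P - ((1 - \<epsilon>) * X r + 2 * J r)" if r: "r < 20" for r
  proof -
    define t where "t = \<tau> r"
    have tG: "t \<in> G" using tauG r t_def by simp
    have tn: "t < n" using tG Gn by auto
    define y where "y = Y t"
    note yf = ms_facts[OF msY[of t]]
    have yfn: "\<And>j. j < n \<Longrightarrow> 0 \<le> y j" "(\<Sum>j<n. y j) = 1" using yf unfolding y_def by auto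
    define yG where "yG = (\<Sum>c\<in>G. y c)"
    have Ry: "(\<Sum>j<n. R i j * y j) = (if a \<le> i \<and> i < a + 20 then y (\<tau> (i - a)) + 1 - yG else 0)"
      for i
    proof (cases "a \<le> i \<and> i < a + 20")
      case True
      have tG': "\<tau> (i - a) \<in> G" using True tauG by auto
      have "(\<Sum>j<n. R i j * y j) = (\<Sum>j<n. if j \<in> G then (if j = \<tau> (i - a) then y j else 0) else y j)"
        unfolding R_def using True by (intro sum.cong refl) auto
      also have "\<dots> = (\<Sum>j\<in>{..<n} \<inter> G. if j = \<tau> (i - a) then y j else 0) + (\<Sum>j\<in>{..<n} \<inter> - G. y j)"
        using sum.If_cases[of "{..<n}" "\<lambda>j. j \<in> G" "\<lambda>j. if j = \<tau> (i - a) then y j else 0" y]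
        by (simp add: Collect_mem_eq)
      also have "{..<n} \<inter> G = G" using Gn by auto
      also have "{..<n} \<inter> - G = {..<n} - G" by auto
      also have "(\<Sum>j\<in>G. if j = \<tau> (i - a) then y j else 0) = y (\<tau> (i - a))"
        using finG tG' by (simp add: sum.delta')
      also have "(\<Sum>j\<in>{..<n} - G. y j) = 1 - yG"
        using sum_diff[of "{..<n}" G y] Gn yfn(2) unfolding yG_def by simp
      finally show ?thesis using True by simp
    next
      case False
      have "(\<Sum>j<n. R i j * y j) = 0" unfolding R_def using False by (intro sum.neutral) auto
      then show ?thesis using False by auto
    qed
    have "approx_nash \<epsilon> n R (D t) x (Y t)" using H3 n1 pmR pmD x_def Y_def by simp
    then have c: "payoff n (unit_vec (a + r)) R y \<le> payoff n x R y + \<epsilon>"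
      using r an' unfolding approx_nash_def y_def by auto
    have l: "payoff n (unit_vec (a + r)) R y = y t + 1 - yG"
      using r an' by (simp add: payoff_unit_left Ry t_def)
    have "payoff n x R y = (\<Sum>i<n. if a \<le> i \<and> i < a + 20 then x i * (y (\<tau> (i - a)) + 1 - yG) else 0)"
      unfolding payoff_alt Ry by (intro sum.cong refl) simp
    also have "\<dots> = (\<Sum>r'<20. X r' * (y (\<tau> r') + 1 - yG))"
      unfolding block_sum[OF an'] X_def by simp
    also have "\<dots> = (\<Sum>r'<20. X r' * y (\<tau> r')) + P * (1 - yG)"
    proof -
      have e: "\<And>r'. X r' * (y (\<tau> r') + 1 - yG) = X r' * y (\<tau> r') + X r' * (1 - yG)"
        by (simp add: algebra_simps)
      show ?thesis unfolding e sum.distrib P_def sum_distrib_right ..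
    qed
    finally have pe: "payoff n x R y = (\<Sum>r'<20. X r' * y (\<tau> r')) + P * (1 - yG)" .
    have ysumG: "(\<Sum>r'<20. y (\<tau> r')) = yG"
      unfolding yG_def using sum.reindex_bij_betw[OF tau, of y] .
    have yt: "\<And>r'. r' < 20 \<Longrightarrow> 0 \<le> y (\<tau> r')" using tauG Gn yfn(1) by blast
    have Xle1: "\<And>r'. r' < 20 \<Longrightarrow> X r' \<le> 1" unfolding X_def using xf(3) an' by simp
    have "(\<Sum>r'<20. X r' * y (\<tau> r')) = X r * y t + (\<Sum>r'\<in>{..<20} - {r}. X r' * y (\<tau> r'))"
      using r t_def by (simp add: sum.remove)
    also have "(\<Sum>r'\<in>{..<20} - {r}. X r' * y (\<tau> r')) \<le> (\<Sum>r'\<in>{..<20} - {r}. y (\<tau> r'))"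
    proof (rule sum_mono)
      fix r' assume "r' \<in> {..<20} - {r}"
      then have "r' < 20" by simp
      then have "X r' * y (\<tau> r') \<le> 1 * y (\<tau> r')" using Xle1 yt by (intro mult_right_mono) auto
      then show "X r' * y (\<tau> r') \<le> y (\<tau> r')" by simp
    qed
    also have "(\<Sum>r'\<in>{..<20} - {r}. y (\<tau> r')) = yG - y t"
      using ysumG r t_def by (simp add: sum.remove)
    finally have sb: "(\<Sum>r'<20. X r' * y (\<tau> r')) \<le> X r * y t + (yG - y t)" by simp
    have Jr: "J r = yG - y t"
    proof -
      have "J r = (\<Sum>c\<in>G. y c - (if c = t then y c else 0))"
        unfolding J_def w_def y_def t_def by (intro sum.cong refl) auto
      also have "\<dots> = yG - y t" using finG tG by (simp add: sum_subtractf sum.delta' yG_def)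
      finally show ?thesis .
    qed
    have J0: "0 \<le> J r" unfolding J_def using wnn G(1) tG t_def by (intro sum_nonneg) auto
    have at: "1 - \<epsilon> \<le> y t" using dom[OF tn] y_def by simp
    have ineq: "y t + 1 - yG \<le> X r * y t + (yG - y t) + P * (1 - yG) + \<epsilon>"
      using c l pe sb by linarith
    have XrP: "X r \<le> P" using XP r by simp
    have P1: "P \<le> 1"
    proof -
      have "P = (\<Sum>i<n. if a \<le> i \<and> i < a + 20 then x i else 0)"
        unfolding block_sum[OF an'] P_def X_def ..
      also have "\<dots> \<le> (\<Sum>i<n. x i)" using xf(1) by (intro sum_mono) auto
      finally show ?thesis using xf(2) by simp
    qed
    have m1: "(P - X r) * (1 - \<epsilon>) \<le> (P - X r) * y t" using XrP at by (intro mult_left_mono) auto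
    have m2: "(2 - P) * J r \<le> 2 * J r" using J0 P0 by (intro mult_right_mono) auto
    have yGe: "yG = y t + J r" using Jr by simp
    have e0: "P * yG = P * y t + P * J r" unfolding yGe by (rule distrib_left)
    have e1: "(P - X r) * (1 - \<epsilon>) = P - \<epsilon> * P - X r + \<epsilon> * X r" by (simp add: algebra_simps)
    have e2: "(P - X r) * y t = P * y t - X r * y t" by (rule left_diff_distrib)
    have e3: "(2 - P) * J r = 2 * J r - P * J r" by (rule left_diff_distrib)
    have e4: "P * (1 - yG) = P - P * yG" by (simp add: right_diff_distrib)
    have e5: "(1 - \<epsilon>) * X r = X r - \<epsilon> * X r" by (simp add: algebra_simps)
    have ineq2: "y t + 1 - yG \<le> X r * y t + (yG - y t) + (P - P * yG) + \<epsilon>" using ineq e4 by linarith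
    show ?thesis using ineq2 m1 m2 e0 e1 e2 e3 e5 yGe by argo
  qed

  define f where "f r = (1 - \<epsilon>) * X r + 2 * J r" for r
  have sumJ: "(\<Sum>r<20. J r) = (\<Sum>t\<in>G. \<Sum>c\<in>G. w t c)"
    unfolding J_def using sum.reindex_bij_betw[OF tau, of "\<lambda>t. \<Sum>c\<in>G. w t c"] .
  have sumf: "(\<Sum>r<20. f r) = (1 - \<epsilon>) * P + 2 * (\<Sum>r<20. J r)"
    unfolding f_def P_def by (simp add: sum.distrib sum_distrib_left)
  have z20: "(0::nat) \<in> {..<20}" by simp
  have ne20: "{..<20::nat} \<noteq> {}" using z20 by (metis empty_iff)
  obtain r where rin: "r \<in> {..<20::nat}" and rle: "f r \<le> sum f {..<20} / real (card {..<20::nat})"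
    using exists_le_avg[OF finite_lessThan ne20, of f] by blast
  have c20: "real (card {..<20::nat}) = 20" by simp
  have r20: "r < 20" using rin by simp
  have fr: "f r \<le> ((1 - \<epsilon>) * P + 40 / 33) / 20"
  proof -
    have "sum f {..<20} \<le> (1 - \<epsilon>) * P + 40 / 33" using sumf sumJ IG by linarith
    then have "sum f {..<20} / 20 \<le> ((1 - \<epsilon>) * P + 40 / 33) / 20" by (rule divide_right_mono) simp
    then show ?thesis using rle c20 by simp
  qed
  have main_ineq: "\<epsilon> \<ge> 1 - \<epsilon> * P - ((1 - \<epsilon>) * P + 40 / 33) / 20"
    using rowb[OF r20] fr unfolding f_def by linarith
  have P199: "P * (199/100) \<le> 1 + \<epsilon>"
  proof -
    have "P * (199/100) \<le> P * (2 - yB j0)" using P0 yBj0 by (intro mult_left_mono) auto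
    then show ?thesis using Pbound by linarith
  qed
  have eps': "\<epsilon> < 501/1000" using eps by simp
  define c where "c = \<epsilon> + (1 - \<epsilon>) / 20"
  have c0: "0 \<le> c" unfolding c_def using eps0 eps by simp
  have e1: "\<epsilon> * P + ((1 - \<epsilon>) * P + 40 / 33) / 20 = P * c + 2 / 33"
    unfolding c_def by (simp add: field_simps)
  have Pc: "P * c \<le> ((1 + \<epsilon>) * (100/199)) * c"
  proof -
    have "P \<le> (1 + \<epsilon>) * (100/199)" using P199 by simp
    then show ?thesis using c0 by (intro mult_right_mono) auto
  qed
  have q: "(1 + \<epsilon>) * c \<le> (1 + 501/1000) * (501/1000 + (1 - 501/1000)/20)"
  proof -
    have "c \<le> 501/1000 + (1 - 501/1000)/20" unfolding c_def diff_divide_distrib using eps' by linarith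
    then show ?thesis using c0 eps' eps0 by (intro mult_mono) auto
  qed
  have "1 \<le> P * c + 2/33 + \<epsilon>" using main_ineq e1 by linarith
  moreover have "(1 + \<epsilon>) * (100/199) * c = (100/199) * ((1 + \<epsilon>) * c)" by simp
  moreover have "(1 + 501/1000) * (501/1000 + (1 - 501/1000)/20) = (15789019/20000000::real)" by simp
  ultimately show False using Pc q eps' by linarith
qed


theorem theorem2:
  fixes \<epsilon> :: real
  assumes "\<epsilon> < 0.501"
  shows "\<not> (\<exists>(fr :: nat \<Rightarrow> (nat \<Rightarrow> nat \<Rightarrow> real) \<Rightarrow> nat \<Rightarrow> real)
               (fc :: nat \<Rightarrow> (nat \<Rightarrow> nat \<Rightarrow> real) \<Rightarrow> nat \<Rightarrow> real).
            (\<forall>n R. 1 \<le> n \<longrightarrow> payoff_matrix n R \<longrightarrow> mixed_strategy n (fr n R)) \<and>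
            (\<forall>n C. 1 \<le> n \<longrightarrow> payoff_matrix n C \<longrightarrow> mixed_strategy n (fc n C)) \<and>
            (\<forall>n R C. 1 \<le> n \<longrightarrow> payoff_matrix n R \<longrightarrow> payoff_matrix n C \<longrightarrow>
                approx_nash \<epsilon> n R C (fr n R) (fc n C)))"
proof
  assume "\<exists>(fr :: nat \<Rightarrow> (nat \<Rightarrow> nat \<Rightarrow> real) \<Rightarrow> nat \<Rightarrow> real)
               (fc :: nat \<Rightarrow> (nat \<Rightarrow> nat \<Rightarrow> real) \<Rightarrow> nat \<Rightarrow> real).
            (\<forall>n R. 1 \<le> n \<longrightarrow> payoff_matrix n R \<longrightarrow> mixed_strategy n (fr n R)) \<and>
            (\<forall>n C. 1 \<le> n \<longrightarrow> payoff_matrix n C \<longrightarrow> mixed_strategy n (fc n C)) \<and>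
            (\<forall>n R C. 1 \<le> n \<longrightarrow> payoff_matrix n R \<longrightarrow> payoff_matrix n C \<longrightarrow>
                approx_nash \<epsilon> n R C (fr n R) (fc n C))"
  then obtain fr fc where
    H1: "\<forall>n R. 1 \<le> n \<longrightarrow> payoff_matrix n R \<longrightarrow> mixed_strategy n (fr n R)" and
    H2: "\<forall>n C. 1 \<le> n \<longrightarrow> payoff_matrix n C \<longrightarrow> mixed_strategy n (fc n C)" and
    H3: "\<forall>n R C. 1 \<le> n \<longrightarrow> payoff_matrix n R \<longrightarrow> payoff_matrix n C \<longrightarrow>
                approx_nash \<epsilon> n R C (fr n R) (fc n C)"
    by blast
  show False using main[OF assms H1 H2 H3] .
qed

end
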